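(* As formal power series in $q$, \[\sum_{\pi\in\mathcal{U}}q^{\mathcal{O}(\pi)}=\frac{1}{(q;q)_\infty^2}\quad\text{and}\quad \sum_{\pi\in\mathcal{D}}q^{\mathcal{O}(\pi')}=(-q;q)_\infty^2,\] where $\mathcal{U}$ is the set of all partitions, $\mathcal{D}$ the set of partitions into distinct parts, $\pi'$ denotes the conjugate of $\pi$, and for $\pi=(\lambda_1,\lambda_2,\dots)$, $\mathcal{O}(\pi)=\lambda_1+\lambda_3+\lambda_5+\cdots$.
   Context: A partition is a finite weakly decreasing sequence of positive integers; the conjugate $\pi'$ of $\pi$ is the partition whose $j$-th part is the number of parts of $\pi$ that are $\ge j$. $(a;q)_\infty=\prod_{n\ge0}(1-aq^n)$. *)

theory Defs
  imports "HOL-Computational_Algebra.Formal_Power_Series"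
begin

definition is_partition :: "nat list \<Rightarrow> bool" where
  "is_partition xs \<longleftrightarrow> sorted_wrt (\<ge>) xs \<and> (\<forall>x\<in>set xs. 0 < x)"

definition conj_part :: "nat list \<Rightarrow> nat list" where
  "conj_part xs = map (\<lambda>j. length (filter (\<lambda>x. j \<le> x) xs)) [1..<Suc (fold max xs 0)]"

text \<open>O(pi) = lambda_1 + lambda_3 + lambda_5 + ... (1-based odd positions = 0-based even indices).\<close>
definition odd_sum :: "nat list \<Rightarrow> nat" where
  "odd_sum xs = (\<Sum>i<length xs. if even i then xs ! i else 0)"

text \<open>Infinite q-Pochhammer symbol (a;q)_infinity as the limit, in the usual (subdegree)
  topology on formal power series, of the finite products.\<close>
definition qpoch_inf :: "real fps \<Rightarrow> real fps" where
  "qpoch_inf a = lim (\<lambda>N. \<Prod>k<N. (1 - a * fps_X ^ k))"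

end

theory Submission
  imports Defs
begin

definition agree :: "nat \<Rightarrow> real fps \<Rightarrow> real fps \<Rightarrow> bool" where
  "agree M A B \<longleftrightarrow> (\<forall>k\<le>M. fps_nth A k = fps_nth B k)"

lemma agree_refl: "agree M A A" by (simp add: agree_def)
lemma agree_sym: "agree M A B \<Longrightarrow> agree M B A" by (simp add: agree_def)
lemma agree_trans: "agree M A B \<Longrightarrow> agree M B C \<Longrightarrow> agree M A C" by (simp add: agree_def)
lemma agree_mono: "agree M A B \<Longrightarrow> K \<le> M \<Longrightarrow> agree K A B" by (simp add: agree_def)

lemma agree_mult:
  assumes "agree M A A'" "agree M B B'"
  shows "agree M (A * B) (A' * B')"
  unfolding agree_def
proof (intro allI impI)
  fix k assume k: "k \<le> M"
  show "fps_nth (A * B) k = fps_nth (A' * B') k"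
    unfolding fps_mult_nth
    by (rule sum.cong) (use assms k in \<open>auto simp: agree_def\<close>)
qed

lemma agree_power: "agree M A A' \<Longrightarrow> agree M (A ^ n) (A' ^ n)"
  by (induction n) (auto simp: agree_mult agree_refl)

lemma agree_prod:
  assumes "\<And>i. i \<in> I \<Longrightarrow> agree M (f i) (g i)"
  shows "agree M (\<Prod>i\<in>I. f i) (\<Prod>i\<in>I. g i)"
  using assms
proof (induction I rule: infinite_finite_induct)
  case (insert x F)
  then show ?case by (simp add: agree_mult)
qed (auto simp: agree_refl)

definition pfin :: "real fps \<Rightarrow> nat \<Rightarrow> real fps" where
  "pfin a N = (\<Prod>k<N. (1 - a * fps_X ^ k))"

lemma pfin_agree_step:
  assumes "fps_nth (a) 0 = 0"
  shows "agree N (pfin a N) (pfin a (Suc N))"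
proof -
  have "agree N (pfin a N * 1) (pfin a N * (1 - a * fps_X ^ N))"
  proof (rule agree_mult[OF agree_refl])
    show "agree N 1 (1 - a * fps_X ^ N)"
      unfolding agree_def
    proof (intro allI impI)
      fix k assume "k \<le> N"
      have "fps_nth ((a * fps_X ^ N)) k = 0"
      proof (cases "k < N")
        case True then show ?thesis by (simp add: fps_X_power_mult_right_nth)
      next
        case False then have "k = N" using \<open>k \<le> N\<close> by simp
        then show ?thesis using assms by (simp add: fps_X_power_mult_right_nth)
      qed
      then show "fps_nth (1::real fps) k = fps_nth (1 - a * fps_X ^ N) k" by simp
    qed
  qed
  then show ?thesis by (simp add: pfin_def)
qed

lemma pfin_agree:
  assumes "fps_nth (a) 0 = 0" "N \<le> N'"
  shows "agree N (pfin a N) (pfin a N')"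
  using assms(2)
proof (induction N' rule: dec_induct)
  case base then show ?case by (rule agree_refl)
next
  case (step m)
  have "agree N (pfin a m) (pfin a (Suc m))"
    using agree_mono[OF pfin_agree_step[OF assms(1), of m] step(1)] .
  then show ?case using step agree_trans by blast
qed

lemma qpoch_agree:
  assumes "fps_nth (a) 0 = 0"
  shows "agree N (qpoch_inf a) (pfin a N)"
proof -
  define L where "L = Abs_fps (\<lambda>n. fps_nth (pfin a n) n)"
  have lim: "(\<lambda>N. pfin a N) \<longlonglongrightarrow> L"
  proof (rule tendsto_fpsI)
    fix n
    show "eventually (\<lambda>x. fps_nth (pfin a x) n = fps_nth L n) sequentially"
      unfolding eventually_sequentially
    proof (intro exI allI impI)
      fix m assume "n \<le> m"
      then show "fps_nth (pfin a m) n = fps_nth L n"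
        using pfin_agree[OF assms \<open>n \<le> m\<close>] by (auto simp: L_def agree_def)
    qed
  qed
  have "qpoch_inf a = L"
    unfolding qpoch_inf_def using limI[OF lim[unfolded pfin_def]] by simp
  then show ?thesis using pfin_agree[OF assms] by (auto simp: L_def agree_def)
qed

lemma sum_indicator_card:
  "finite A \<Longrightarrow> (\<Sum>x\<in>A. (if P x then 1 else 0::real)) = real (card {x\<in>A. P x})"
  by (simp add: sum.If_cases Int_def conj_commute)

lemma coeff_prod_geom:
  fixes w :: "nat \<Rightarrow> nat"
  shows "fps_nth (\<Prod>m<L. \<Sum>d\<le>M. fps_X ^ (w m * d) :: real fps) n
     = real (card {g \<in> PiE {..<L} (\<lambda>_. {..M}). (\<Sum>m<L. w m * g m) = n})"
proof -
  have "(\<Prod>m<L. \<Sum>d\<le>M. fps_X ^ (w m * d) :: real fps)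
      = (\<Sum>g\<in>PiE {..<L} (\<lambda>_. {..M}). \<Prod>m<L. fps_X ^ (w m * g m))"
    by (rule prod_sum_PiE) auto
  also have "\<dots> = (\<Sum>g\<in>PiE {..<L} (\<lambda>_. {..M}). fps_X ^ (\<Sum>m<L. w m * g m))"
    by (simp add: power_sum)
  finally have "fps_nth (\<Prod>m<L. \<Sum>d\<le>M. fps_X ^ (w m * d) :: real fps) n
     = (\<Sum>g\<in>PiE {..<L} (\<lambda>_. {..M}). if n = (\<Sum>m<L. w m * g m) then 1 else 0)"
    by (simp add: fps_sum_nth)
  also have "\<dots> = real (card {g \<in> PiE {..<L} (\<lambda>_. {..M}). (\<Sum>m<L. w m * g m) = n})"
    by (subst sum_indicator_card) (auto simp: finite_PiE eq_commute)
  finally show ?thesis .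
qed

lemma coeff_prod_sets:
  fixes w :: "nat \<Rightarrow> nat"
  assumes "finite A"
  shows "fps_nth (\<Prod>x\<in>A. 1 + fps_X ^ w x :: real fps) n
     = real (card {T \<in> Pow A. (\<Sum>x\<in>T. w x) = n})"
proof -
  have "(\<Prod>x\<in>A. 1 + fps_X ^ w x :: real fps) = (\<Prod>x\<in>A. fps_X ^ w x + 1)"
    by (simp add: add.commute)
  also have "\<dots> = (\<Sum>T\<in>Pow A. (\<Prod>x\<in>T. fps_X ^ w x) * (\<Prod>x\<in>A-T. 1))"
    by (rule prod_add[OF assms])
  also have "\<dots> = (\<Sum>T\<in>Pow A. fps_X ^ (\<Sum>x\<in>T. w x))"
    by (simp add: power_sum)
  finally have "fps_nth (\<Prod>x\<in>A. 1 + fps_X ^ w x :: real fps) n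
     = (\<Sum>T\<in>Pow A. if n = (\<Sum>x\<in>T. w x) then 1 else 0)"
    by (simp add: fps_sum_nth)
  also have "\<dots> = real (card {T \<in> Pow A. (\<Sum>x\<in>T. w x) = n})"
    by (subst sum_indicator_card) (auto simp: assms eq_commute)
  finally show ?thesis .
qed

lemma geom_fps:
  "(\<Sum>d\<le>M. fps_X ^ (w * d) :: real fps) * (1 - fps_X ^ w) = 1 - fps_X ^ (w * Suc M)"
proof -
  have "1 - (fps_X ^ w :: real fps) ^ Suc M = (1 - fps_X ^ w) * (\<Sum>i<Suc M. (fps_X ^ w) ^ i)"
    by (rule one_diff_power_eq)
  moreover have "(\<Sum>d\<le>M. fps_X ^ (w * d) :: real fps) = (\<Sum>i<Suc M. (fps_X ^ w) ^ i)"
    by (simp add: power_mult lessThan_Suc_atMost)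
  moreover have "(fps_X ^ w :: real fps) ^ Suc M = fps_X ^ (w * Suc M)"
    by (simp only: power_mult)
  ultimately show ?thesis by (simp add: mult.commute)
qed

lemma agree_one_minus:
  assumes "M < e"
  shows "agree M (1 - fps_X ^ e) (1::real fps)"
  using assms by (auto simp: agree_def)

lemma reindex0:
  fixes h :: "nat \<Rightarrow> 'a::comm_monoid_mult"
  shows "(\<Prod>m<2*N. h ((m+2) div 2)) = (\<Prod>k<N. h (k+1) ^ 2)"
proof (induction N)
  case (Suc N)
  have "(\<Prod>m<2*Suc N. h ((m+2) div 2)) = (\<Prod>m<2*N. h ((m+2) div 2)) * h (N+1) * h (N+1)"
    by (simp add: mult.assoc)
  also have "\<dots> = (\<Prod>k<Suc N. h (k+1) ^ 2)" using Suc by (simp add: power2_eq_square mult.assoc)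
  finally show ?case .
qed simp

lemma reindex1:
  fixes h :: "nat \<Rightarrow> 'a::comm_monoid_mult"
  shows "(\<Prod>x\<in>{1..2*N}. h ((x+1) div 2)) = (\<Prod>k<N. h (k+1) ^ 2)"
proof -
  have "(\<Prod>x\<in>{1..2*N}. h ((x+1) div 2)) = (\<Prod>m<2*N. h ((m+2) div 2))"
  proof (rule prod.reindex_bij_witness[of _ "\<lambda>m. m+1" "\<lambda>x. x - 1"])
  qed auto
  then show ?thesis using reindex0 by simp
qed

lemma pfin_X: "pfin fps_X N = (\<Prod>k<N. 1 - fps_X ^ (k+1))"
  by (simp add: pfin_def)
lemma pfin_mX: "pfin (- fps_X) N = (\<Prod>k<N. 1 + fps_X ^ (k+1))"
  by (simp add: pfin_def)

lemma odd_sum_Nil[simp]: "odd_sum [] = 0"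
  by (simp add: odd_sum_def)

lemma odd_sum_single[simp]: "odd_sum [x] = x"
  by (simp add: odd_sum_def)

lemma odd_sum_CC[simp]: "odd_sum (x # y # xs) = x + odd_sum xs"
proof -
  have "odd_sum (x # y # xs) = (\<Sum>i<Suc (Suc (length xs)). if even i then (x # y # xs) ! i else 0)"
    by (simp add: odd_sum_def)
  also have "\<dots> = x + (\<Sum>i<length xs. if even i then xs ! i else 0)"
    by (subst sum.lessThan_Suc_shift, subst sum.lessThan_Suc_shift) (simp, rule sum.cong, simp_all)
  finally show ?thesis by (simp add: odd_sum_def)
qed

lemma odd_sum_zero: "\<forall>x\<in>set xs. x = 0 \<Longrightarrow> odd_sum xs = 0"
  unfolding odd_sum_def by (intro sum.neutral) auto

lemma odd_sum_pad: "odd_sum (xs @ replicate k 0) = odd_sum xs"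
proof (induction xs rule: induct_list012)
  case 1 then show ?case by (simp add: odd_sum_zero)
next
  case (2 x) then show ?case
    by (cases k) (auto simp: odd_sum_zero)
next
  case (3 x y zs) then show ?case by simp
qed

lemma partition_length: "is_partition p \<Longrightarrow> length p \<le> 2 * odd_sum p"
proof (induction p rule: induct_list012)
  case (2 x) then show ?case by (auto simp: is_partition_def)
next
  case (3 x y zs)
  then have "is_partition zs" "0 < x" by (auto simp: is_partition_def)
  with 3 show ?case by simp
qed simp

lemma sorted_desc_split:
  "sorted_wrt (\<ge>) (ys::nat list) \<Longrightarrow>
     ys = filter (\<lambda>x. 0 < x) ys @ replicate (length ys - length (filter (\<lambda>x. 0 < x) ys)) 0"
proof (induction ys)
  case (Cons y ys)
  show ?case
  proof (cases "0 < y")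
    case True
    with Cons have "ys = filter (\<lambda>x. 0 < x) ys @ replicate (length ys - length (filter (\<lambda>x. 0 < x) ys)) 0"
      by simp
    moreover have "length (filter (\<lambda>x. 0 < x) ys) \<le> length ys" by simp
    ultimately show ?thesis using True
      by (simp add: Suc_diff_le)
  next
    case False
    then have "y = 0" by simp
    with Cons.prems have "\<forall>x\<in>set ys. x = 0" by auto
    then have "filter (\<lambda>x. 0 < x) ys = []" "ys = replicate (length ys) 0"
      by (auto simp: filter_empty_conv replicate_length_same)
    then show ?thesis using \<open>y = 0\<close> by simp
  qed
qed simp

lemma sorted_desc_replicate: "sorted_wrt (\<ge>) (replicate k (0::nat))"
  by (induction k) auto

definition pad :: "nat \<Rightarrow> nat list \<Rightarrow> nat list" where
  "pad L p = p @ replicate (L - length p) 0"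

lemma bij_pad:
  assumes "2 * n \<le> L"
  shows "bij_betw (pad L) {p. is_partition p \<and> odd_sum p = n}
           {ys. length ys = L \<and> sorted_wrt (\<ge>) ys \<and> odd_sum ys = n}"
proof (rule bij_betw_byWitness[where f' = "filter (\<lambda>x. 0 < x)"])
  show "\<forall>a\<in>{p. is_partition p \<and> odd_sum p = n}. filter (\<lambda>x. 0 < x) (pad L a) = a"
    by (auto simp: pad_def is_partition_def)
  show "\<forall>a'\<in>{ys. length ys = L \<and> sorted_wrt (\<ge>) ys \<and> odd_sum ys = n}.
          pad L (filter (\<lambda>x. 0 < x) a') = a'"
    using sorted_desc_split by (auto simp: pad_def)
  show "pad L ` {p. is_partition p \<and> odd_sum p = n}
          \<subseteq> {ys. length ys = L \<and> sorted_wrt (\<ge>) ys \<and> odd_sum ys = n}"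
  proof safe
    fix p assume p: "is_partition p" "n = odd_sum p"
    have "length p \<le> L" using partition_length[OF p(1)] p(2) assms by simp
    then show "length (pad L p) = L" by (simp add: pad_def)
    show "sorted_wrt (\<ge>) (pad L p)"
      using p(1) by (auto simp: pad_def is_partition_def sorted_wrt_append sorted_desc_replicate)
    show "odd_sum (pad L p) = odd_sum p" by (simp add: pad_def odd_sum_pad)
  qed
  show "filter (\<lambda>x. 0 < x) ` {ys. length ys = L \<and> sorted_wrt (\<ge>) ys \<and> odd_sum ys = n}
          \<subseteq> {p. is_partition p \<and> odd_sum p = n}"
  proof safe
    fix ys :: "nat list" assume ys: "sorted_wrt (\<ge>) ys" "n = odd_sum ys" "L = length ys"
    show "is_partition (filter (\<lambda>x. 0 < x) ys)"
      using ys(1) by (auto simp: is_partition_def sorted_wrt_filter)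
    show "odd_sum (filter (\<lambda>x. 0 < x) ys) = odd_sum ys"
      using sorted_desc_split[OF ys(1)] odd_sum_pad by metis
  qed
qed

lemma count_even: "(\<Sum>i<n. if even i then c else 0::nat) = ((n+1) div 2) * c"
proof (induction n)
  case (Suc n)
  then show ?case by (cases "even n") (auto simp: algebra_simps elim!: evenE oddE)
qed simp

lemma telescope:
  fixes f :: "nat \<Rightarrow> nat"
  assumes dec: "\<And>m. f (Suc m) \<le> f m" and "k \<le> L"
  shows "(\<Sum>m\<in>{k..<L}. f m - f (Suc m)) = f k - f L"
  using assms(2)
proof (induction L)
  case (Suc L)
  show ?case
  proof (cases "k \<le> L")
    case True
    have "f L \<le> f k" using lift_Suc_antimono_le[of f, OF dec True] .
    then show ?thesis using Suc True dec[of L] by (simp add: sum.atLeastLessThan_Suc)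
  next
    case False then have "k = Suc L" using Suc by simp
    then show ?thesis by simp
  qed
qed simp

definition ss :: "nat \<Rightarrow> (nat \<Rightarrow> nat) \<Rightarrow> nat list" where
  "ss L g = map (\<lambda>k. \<Sum>m\<in>{k..<L}. g m) [0..<L]"

definition gv :: "nat list \<Rightarrow> nat \<Rightarrow> nat" where
  "gv ys m = (if m < length ys then ys ! m else 0)"

definition dd :: "nat \<Rightarrow> nat list \<Rightarrow> nat \<Rightarrow> nat" where
  "dd L ys = restrict (\<lambda>m. gv ys m - gv ys (Suc m)) {..<L}"

lemma weight_ss: "odd_sum (ss L g) = (\<Sum>m<L. (m+2) div 2 * g m)"
proof (induction L)
  case 0 then show ?case by (simp add: ss_def odd_sum_def)
next
  case (Suc L)
  have "odd_sum (ss (Suc L) g) = (\<Sum>i<Suc L. if even i then (\<Sum>m\<in>{i..<Suc L}. g m) else 0)"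
    unfolding ss_def odd_sum_def length_map length_upt
    by (intro sum.cong) (auto simp del: upt_Suc)
  also have "\<dots> = (\<Sum>i<Suc L. (if even i then (\<Sum>m\<in>{i..<L}. g m) else 0) + (if even i then g L else 0))"
    by (rule sum.cong) (auto simp: sum.atLeastLessThan_Suc)
  also have "\<dots> = (\<Sum>i<L. if even i then (\<Sum>m\<in>{i..<L}. g m) else 0) + ((L+2) div 2) * g L"
    by (simp add: sum.distrib count_even del: sum.lessThan_Suc) (simp)
  also have "(\<Sum>i<L. if even i then (\<Sum>m\<in>{i..<L}. g m) else 0) = odd_sum (ss L g)"
    unfolding ss_def odd_sum_def length_map length_upt
    by (intro sum.cong) auto
  finally show ?case using Suc by simp
qed

lemma bij_dd:
  "bij_betw (dd L) {ys. length ys = L \<and> sorted_wrt (\<ge>) ys \<and> odd_sum ys = n}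
     {g \<in> PiE {..<L} (\<lambda>_. UNIV). (\<Sum>m<L. (m+2) div 2 * g m) = n}"
proof (rule bij_betw_byWitness[where f' = "ss L"])
  have ssdd: "ss L (dd L ys) = ys" if ys: "length ys = L" "sorted_wrt (\<ge>) ys" for ys
  proof -
    have dec: "gv ys (Suc m) \<le> gv ys m" for m
      using ys by (auto simp: gv_def sorted_wrt_iff_nth_less)
    show ?thesis
    proof (rule nth_equalityI)
      show "length (ss L (dd L ys)) = length ys" using ys by (simp add: ss_def)
      fix k assume "k < length (ss L (dd L ys))"
      then have k: "k < L" by (simp add: ss_def)
      have "ss L (dd L ys) ! k = (\<Sum>m\<in>{k..<L}. gv ys m - gv ys (Suc m))"
        using k by (simp add: ss_def dd_def)
      also have "\<dots> = gv ys k - gv ys L" using telescope[of "gv ys", OF dec] k by simp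
      also have "\<dots> = ys ! k" using k ys by (simp add: gv_def)
      finally show "ss L (dd L ys) ! k = ys ! k" .
    qed
  qed
  show "\<forall>a\<in>{ys. length ys = L \<and> sorted_wrt (\<ge>) ys \<and> odd_sum ys = n}. ss L (dd L a) = a"
    using ssdd by auto
  show "\<forall>a'\<in>{g \<in> PiE {..<L} (\<lambda>_. UNIV). (\<Sum>m<L. (m+2) div 2 * g m) = n}. dd L (ss L a') = a'"
  proof safe
    fix g :: "nat \<Rightarrow> nat" assume g: "g \<in> PiE {..<L} (\<lambda>_. UNIV)"
    have gv: "gv (ss L g) m = (\<Sum>m\<in>{m..<L}. g m)" if "m \<le> L" for m
      using that by (auto simp: gv_def ss_def)
    show "dd L (ss L g) = g"
    proof
      fix m
      show "dd L (ss L g) m = g m"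
      proof (cases "m < L")
        case True
        then show ?thesis using gv[of m] gv[of "Suc m"]
          by (simp add: dd_def sum.atLeast_Suc_lessThan)
      next
        case False
        then show ?thesis using g by (auto simp: dd_def PiE_def extensional_def)
      qed
    qed
  qed
  show "dd L ` {ys. length ys = L \<and> sorted_wrt (\<ge>) ys \<and> odd_sum ys = n}
     \<subseteq> {g \<in> PiE {..<L} (\<lambda>_. UNIV). (\<Sum>m<L. (m+2) div 2 * g m) = n}"
  proof
    fix g assume "g \<in> dd L ` {ys. length ys = L \<and> sorted_wrt (\<ge>) ys \<and> odd_sum ys = n}"
    then obtain ys where ys: "length ys = L" "sorted_wrt (\<ge>) ys" "odd_sum ys = n"
      and g: "g = dd L ys" by auto
    have "g \<in> PiE {..<L} (\<lambda>_. UNIV)" unfolding g by (auto simp: dd_def)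
    moreover have "odd_sum ys = odd_sum (ss L (dd L ys))" using ssdd ys by simp
    then have "(\<Sum>m<L. (m+2) div 2 * g m) = n"
      using ys g by (simp add: weight_ss)
    ultimately show "g \<in> {g \<in> PiE {..<L} (\<lambda>_. UNIV). (\<Sum>m<L. (m+2) div 2 * g m) = n}"
      by simp
  qed
  show "ss L ` {g \<in> PiE {..<L} (\<lambda>_. UNIV). (\<Sum>m<L. (m+2) div 2 * g m) = n}
    \<subseteq> {ys. length ys = L \<and> sorted_wrt (\<ge>) ys \<and> odd_sum ys = n}"
  proof safe
    fix g :: "nat \<Rightarrow> nat"
    show "length (ss L g) = L" by (simp add: ss_def)
    show "sorted_wrt (\<ge>) (ss L g)"
      by (auto simp: ss_def sorted_wrt_iff_nth_less intro!: sum_mono2)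
    show "odd_sum (ss L g) = (\<Sum>m<L. (m+2) div 2 * g m)" by (rule weight_ss)
  qed
qed

lemma bounded_eq:
  fixes L M n :: nat
  assumes "n \<le> M"
  shows "{g \<in> PiE {..<L} (\<lambda>_. {..M}). (\<Sum>m<L. (m+2) div 2 * g m) = n}
       = {g \<in> PiE {..<L} (\<lambda>_. UNIV). (\<Sum>m<L. (m+2) div 2 * g m) = n}"
proof (intro equalityI subsetI)
  fix g assume "g \<in> {g \<in> PiE {..<L} (\<lambda>_. {..M}). (\<Sum>m<L. (m+2) div 2 * g m) = n}"
  then show "g \<in> {g \<in> PiE {..<L} (\<lambda>_. UNIV). (\<Sum>m<L. (m+2) div 2 * g m) = n}"
    by (auto simp: PiE_def Pi_def)
next
  fix g assume "g \<in> {g \<in> PiE {..<L} (\<lambda>_. UNIV). (\<Sum>m<L. (m+2) div 2 * g m) = n}"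
  then have g: "g \<in> PiE {..<L} (\<lambda>_. UNIV)" "(\<Sum>m<L. (m+2) div 2 * g m) = n" by auto
  have "g m \<le> M" if "m < L" for m
  proof -
    have "(m+2) div 2 * g m \<le> (\<Sum>m<L. (m+2) div 2 * g m)"
      using that by (intro member_le_sum) auto
    moreover have "g m \<le> (m+2) div 2 * g m" by simp
    ultimately show ?thesis using g assms by simp
  qed
  then show "g \<in> {g \<in> PiE {..<L} (\<lambda>_. {..M}). (\<Sum>m<L. (m+2) div 2 * g m) = n}"
    using g by (auto simp: PiE_def Pi_def)
qed

lemma count1:
  fixes L M n :: nat
  assumes "2 * n \<le> L" "n \<le> M"
  shows "card {p. is_partition p \<and> odd_sum p = n}
       = card {g \<in> PiE {..<L} (\<lambda>_. {..M}). (\<Sum>m<L. (m+2) div 2 * g m) = n}"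
  unfolding bounded_eq[OF assms(2)]
  using bij_betw_same_card[OF bij_betw_trans[OF bij_pad[OF assms(1)] bij_dd]] .

lemma fold_max_ge: "(a::nat) \<le> fold max p a \<and> (\<forall>x\<in>set p. x \<le> fold max p a)"
proof (induction p arbitrary: a)
  case (Cons y p)
  from Cons[of "max y a"] show ?case by auto
qed simp

lemma sum_even_le:
  assumes "x \<le> m"
  shows "(\<Sum>i<m. if even i \<and> Suc i \<le> x then 1 else 0::nat) = (x+1) div 2"
  using assms
proof (induction m rule: dec_induct)
  case base
  have "(\<Sum>i<x. if even i \<and> Suc i \<le> x then 1 else 0::nat) = (\<Sum>i<x. if even i then 1 else 0)"
    by (rule sum.cong) auto
  then show ?case by (simp add: count_even)
next
  case (step m)
  then show ?case by simp
qed

lemma conj_sum: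
  "\<forall>x\<in>set p. x \<le> m \<Longrightarrow>
   (\<Sum>i<m. if even i then length (filter (\<lambda>x. Suc i \<le> x) p) else 0)
     = sum_list (map (\<lambda>x. (x+1) div 2) p)"
proof (induction p)
  case Nil then show ?case by simp
next
  case (Cons a p)
  have "(\<Sum>i<m. if even i then length (filter (\<lambda>x. Suc i \<le> x) (a # p)) else 0)
      = (\<Sum>i<m. (if even i \<and> Suc i \<le> a then 1 else 0) +
                 (if even i then length (filter (\<lambda>x. Suc i \<le> x) p) else 0))"
    by (rule sum.cong) auto
  also have "\<dots> = (a+1) div 2 + sum_list (map (\<lambda>x. (x+1) div 2) p)"
    using Cons by (simp add: sum.distrib sum_even_le)
  finally show ?case by simp
qed

lemma odd_sum_conj: "odd_sum (conj_part p) = sum_list (map (\<lambda>x. (x+1) div 2) p)"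
proof -
  define m where "m = fold max p 0"
  have "odd_sum (conj_part p) =
     (\<Sum>i<m. if even i then length (filter (\<lambda>x. Suc i \<le> x) p) else 0)"
    unfolding conj_part_def odd_sum_def length_map length_upt m_def[symmetric]
    by (intro sum.cong) (auto simp del: upt_Suc)
  also have "\<dots> = sum_list (map (\<lambda>x. (x+1) div 2) p)"
    using fold_max_ge[of 0 p] by (intro conj_sum) (auto simp: m_def)
  finally show ?thesis .
qed

lemma count2:
  fixes L n :: nat
  assumes "2 * n \<le> L"
  shows "card {p. is_partition p \<and> distinct p \<and> odd_sum (conj_part p) = n}
       = card {T \<in> Pow {1..L}. (\<Sum>x\<in>T. (x+1) div 2) = n}"
proof (rule bij_betw_same_card[of set])
  show "bij_betw set {p. is_partition p \<and> distinct p \<and> odd_sum (conj_part p) = n}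
       {T \<in> Pow {1..L}. (\<Sum>x\<in>T. (x+1) div 2) = n}"
  proof (rule bij_betw_byWitness[where f' = "\<lambda>T. rev (sorted_list_of_set T)"])
    show "\<forall>p\<in>{p. is_partition p \<and> distinct p \<and> odd_sum (conj_part p) = n}.
            rev (sorted_list_of_set (set p)) = p"
    proof
      fix p assume "p \<in> {p. is_partition p \<and> distinct p \<and> odd_sum (conj_part p) = n}"
      then have p: "sorted_wrt (\<ge>) p" "distinct p" by (auto simp: is_partition_def)
      have "sorted (rev p)" using p(1) by (simp add: sorted_wrt_rev)
      then have "sorted_list_of_set (set (rev p)) = rev p"
        using p(2) by (intro sorted_distinct_set_unique) (auto simp: sorted_list_of_set)
      then show "rev (sorted_list_of_set (set p)) = p" by simp
    qed
    show "\<forall>T\<in>{T \<in> Pow {1..L}. (\<Sum>x\<in>T. (x+1) div 2) = n}.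
            set (rev (sorted_list_of_set T)) = T"
      by (auto dest: finite_subset)
    show "set ` {p. is_partition p \<and> distinct p \<and> odd_sum (conj_part p) = n}
            \<subseteq> {T \<in> Pow {1..L}. (\<Sum>x\<in>T. (x+1) div 2) = n}"
    proof
      fix T assume "T \<in> set ` {p. is_partition p \<and> distinct p \<and> odd_sum (conj_part p) = n}"
      then obtain p where p: "is_partition p" "distinct p" "odd_sum (conj_part p) = n"
        and T: "T = set p" by auto
      have w: "(\<Sum>x\<in>T. (x+1) div 2) = n"
        using p T by (simp add: odd_sum_conj sum_list_distinct_conv_sum_set)
      have "T \<subseteq> {1..L}"
      proof
        fix x assume x: "x \<in> T"
        then have "0 < x" using p T by (auto simp: is_partition_def)
        have "(x+1) div 2 \<le> (\<Sum>x\<in>T. (x+1) div 2)"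
          using x T by (intro member_le_sum) auto
        then have "x \<le> L" using w assms by linarith
        then show "x \<in> {1..L}" using \<open>0 < x\<close> by simp
      qed
      then show "T \<in> {T \<in> Pow {1..L}. (\<Sum>x\<in>T. (x+1) div 2) = n}" using w by simp
    qed
    show "(\<lambda>T. rev (sorted_list_of_set T)) ` {T \<in> Pow {1..L}. (\<Sum>x\<in>T. (x+1) div 2) = n}
            \<subseteq> {p. is_partition p \<and> distinct p \<and> odd_sum (conj_part p) = n}"
    proof
      fix p assume "p \<in> (\<lambda>T. rev (sorted_list_of_set T)) ` {T \<in> Pow {1..L}. (\<Sum>x\<in>T. (x+1) div 2) = n}"
      then obtain T where T: "T \<subseteq> {1..L}" "(\<Sum>x\<in>T. (x+1) div 2) = n"
        and p: "p = rev (sorted_list_of_set T)" by auto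
      have fin: "finite T" using T(1) finite_subset by blast
      have sp: "set p = T" "distinct p" "sorted (rev p)"
        using p fin by (auto simp: sorted_list_of_set)
      have "sorted_wrt (\<ge>) p" using sp(3) by (simp add: sorted_wrt_rev)
      moreover have "\<forall>x\<in>set p. 0 < x" using sp(1) T(1) by auto
      ultimately have "is_partition p" by (simp add: is_partition_def)
      moreover have "odd_sum (conj_part p) = n"
        using sp T by (simp add: odd_sum_conj sum_list_distinct_conv_sum_set)
      ultimately show "p \<in> {p. is_partition p \<and> distinct p \<and> odd_sum (conj_part p) = n}"
        using sp by simp
    qed
  qed
qed

lemma part1:
  "Abs_fps (\<lambda>n. of_nat (card {p. is_partition p \<and> odd_sum p = n})) * (qpoch_inf fps_X) ^ 2 = 1"
  (is "?G * ?Q ^ 2 = 1")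
proof (rule fps_ext)
  fix n
  define N where "N = Suc n"
  define L where "L = 2 * N"
  define T :: "real fps" where "T = (\<Prod>m<L. \<Sum>d\<le>n. fps_X ^ ((m+2) div 2 * d))"
  have aG: "agree n ?G T"
    unfolding agree_def
  proof (intro allI impI)
    fix k assume k: "k \<le> n"
    have "fps_nth T k = real (card {g \<in> PiE {..<L} (\<lambda>_. {..n}). (\<Sum>m<L. (m+2) div 2 * g m) = k})"
      unfolding T_def by (rule coeff_prod_geom)
    also have "\<dots> = real (card {p. is_partition p \<and> odd_sum p = k})"
      using count1[of k L n] k by (simp add: L_def N_def)
    finally show "fps_nth ?G k = fps_nth T k" by simp
  qed
  have aQ: "agree n ?Q (pfin fps_X N)"
    using agree_mono[OF qpoch_agree[of fps_X N]] by (simp add: N_def)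
  have Q2: "pfin fps_X N ^ 2 = (\<Prod>m<L. 1 - fps_X ^ ((m+2) div 2))"
    unfolding pfin_X L_def reindex0[of "\<lambda>j. 1 - fps_X ^ j"] by (simp add: prod_power_distrib)
  have "T * pfin fps_X N ^ 2 = (\<Prod>m<L. (\<Sum>d\<le>n. fps_X ^ ((m+2) div 2 * d)) * (1 - fps_X ^ ((m+2) div 2)))"
    unfolding T_def Q2 by (simp add: prod.distrib)
  also have "\<dots> = (\<Prod>m<L. 1 - fps_X ^ ((m+2) div 2 * Suc n))"
    by (rule prod.cong[OF refl geom_fps])
  finally have eq: "T * pfin fps_X N ^ 2 = (\<Prod>m<L. 1 - fps_X ^ ((m+2) div 2 * Suc n))" .
  have a1: "agree n (T * pfin fps_X N ^ 2) (\<Prod>m<L. 1)"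
    unfolding eq by (intro agree_prod agree_one_minus) simp
  have "agree n (?G * ?Q ^ 2) (T * pfin fps_X N ^ 2)"
    by (intro agree_mult agree_power aG aQ)
  then have "agree n (?G * ?Q ^ 2) 1" using a1 agree_trans by simp
  then show "fps_nth (?G * ?Q ^ 2) n = fps_nth 1 n" by (simp add: agree_def)
qed

lemma part2:
  "Abs_fps (\<lambda>n. of_nat (card {p. is_partition p \<and> distinct p \<and> odd_sum (conj_part p) = n}))
     = (qpoch_inf (- fps_X)) ^ 2"
  (is "?G = ?Q ^ 2")
proof (rule fps_ext)
  fix n
  define N where "N = Suc n"
  define L where "L = 2 * N"
  have aQ: "agree n ?Q (pfin (- fps_X) N)"
    using agree_mono[OF qpoch_agree[of "- fps_X" N]] by (simp add: N_def)
  have Q2: "pfin (- fps_X) N ^ 2 = (\<Prod>x\<in>{1..L}. 1 + fps_X ^ ((x+1) div 2))"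
    unfolding pfin_mX L_def reindex1[of "\<lambda>j. 1 + fps_X ^ j"] by (simp add: prod_power_distrib)
  have "fps_nth (?Q ^ 2) n = fps_nth (pfin (- fps_X) N ^ 2) n"
    using agree_power[OF aQ, of 2] by (simp add: agree_def)
  also have "\<dots> = real (card {T \<in> Pow {1..L}. (\<Sum>x\<in>T. (x+1) div 2) = n})"
    unfolding Q2 by (rule coeff_prod_sets) simp
  also have "\<dots> = real (card {p. is_partition p \<and> distinct p \<and> odd_sum (conj_part p) = n})"
    using count2[of n L] by (simp add: L_def N_def)
  finally show "fps_nth ?G n = fps_nth (?Q ^ 2) n" by simp
qed

theorem theorem12:
  shows "Abs_fps (\<lambda>n. of_nat (card {p. is_partition p \<and> odd_sum p = n}))
           = inverse ((qpoch_inf fps_X) ^ 2)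
       \<and> Abs_fps (\<lambda>n. of_nat (card {p. is_partition p \<and> distinct p \<and> odd_sum (conj_part p) = n}))
           = (qpoch_inf (- fps_X)) ^ 2"
proof
  show "Abs_fps (\<lambda>n. of_nat (card {p. is_partition p \<and> odd_sum p = n}))
           = inverse ((qpoch_inf fps_X) ^ 2)"
  proof -
    have "(qpoch_inf fps_X) ^ 2 * Abs_fps (\<lambda>n. of_nat (card {p. is_partition p \<and> odd_sum p = n})) = 1"
      using part1 by (simp only: mult.commute)
    from fps_inverse_unique[OF this] show ?thesis by simp
  qed
  show "Abs_fps (\<lambda>n. of_nat (card {p. is_partition p \<and> distinct p \<and> odd_sum (conj_part p) = n}))
           = (qpoch_inf (- fps_X)) ^ 2"
    by (rule part2)
qed

end
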